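(* Let $T$ be a rooted binary phylogenetic tree with root $\rho$ of out-degree 2 and children $\rho_1,\rho_2$, and let $\dot T_1,\dot T_2$ be as defined in the context. Under the $N_2$ model, $$RA_{\rm MP}(T)\ \ge\ \tfrac12\big(RA_{\rm MP}(\dot T_1)+RA_{\rm MP}(\dot T_2)\big).$$
   Context: A rooted binary phylogenetic tree is a finite tree with a distinguished root vertex, all edges directed away from it, in which the root has out-degree 2 or 1 (the edge at a root of out-degree 1 is the stem edge), and every other vertex has in-degree 1 and out-degree 0 or 2; out-degree-0 vertices are leaves. Under the Neyman 2-state model $N_2$, each edge $e$ carries a substitution probability $p_e\in[0,\frac12]$; given the root state, states propagate independently along edges, each edge changing state with probability $p_e$; $f$ is the restriction of the states to the leaves. Fitch sets: each leaf $x$ gets $\{f(x)\}$; a vertex with children $v_1,v_2$ gets $\mathrm{FS}(v_1)\cap\mathrm{FS}(v_2)$ if nonempty, else the union; a vertex with one child gets its child's set. $\mathrm{MP}$ chooses a uniformly random element of the root's Fitch set, and $RA_{\rm MP}$ of a tree is the probability that this choice equals the true root state. For $i=1,2$, $T_i$ is the maximal subtree of $T$ rooted at $\rho_i$, and $\dot T_i$ is $T_i$ together with the edge $(\rho,\rho_i)$ (with its substitution probability from $T$) as stem edge, rooted at $\rho$. *)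

theory Defs
  imports "HOL-Probability.Probability_Mass_Function"
begin

(* Subtrees whose root is not the overall root: a vertex is a leaf or has two
   children; each child edge carries its substitution probability. *)
datatype btree = Leaf | Node real btree real btree

(* Rooted binary phylogenetic trees: root of out-degree 2, or root of
   out-degree 1 with a stem edge (with its substitution probability). *)
datatype ptree = Root2 real btree real btree | Root1 real btree

fun valid_bt :: "btree \<Rightarrow> bool" where
  "valid_bt Leaf = True"
| "valid_bt (Node p1 a p2 b) \<longleftrightarrow>
     0 \<le> p1 \<and> p1 \<le> 1/2 \<and> 0 \<le> p2 \<and> p2 \<le> 1/2 \<and> valid_bt a \<and> valid_bt b"

fun valid_pt :: "ptree \<Rightarrow> bool" where
  "valid_pt (Root2 p1 a p2 b) = valid_bt (Node p1 a p2 b)"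
| "valid_pt (Root1 p a) \<longleftrightarrow> 0 \<le> p \<and> p \<le> 1/2 \<and> valid_bt a"

fun nleaves :: "btree \<Rightarrow> nat" where
  "nleaves Leaf = 1"
| "nleaves (Node _ a _ b) = nleaves a + nleaves b"

definition edge_step :: "bool \<Rightarrow> real \<Rightarrow> bool pmf" where
  "edge_step s p = map_pmf (\<lambda>c. if c then \<not> s else s) (bernoulli_pmf p)"

fun leaf_states :: "btree \<Rightarrow> bool \<Rightarrow> bool list pmf" where
  "leaf_states Leaf s = return_pmf [s]"
| "leaf_states (Node p1 a p2 b) s =
     bind_pmf (edge_step s p1) (\<lambda>s1. bind_pmf (edge_step s p2) (\<lambda>s2.
     bind_pmf (leaf_states a s1) (\<lambda>xs. map_pmf (\<lambda>ys. xs @ ys) (leaf_states b s2))))"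

definition fitch_combine :: "bool set \<Rightarrow> bool set \<Rightarrow> bool set" where
  "fitch_combine A B = (if A \<inter> B \<noteq> {} then A \<inter> B else A \<union> B)"

fun fitch :: "btree \<Rightarrow> bool list \<Rightarrow> bool set" where
  "fitch Leaf xs = {hd xs}"
| "fitch (Node _ a _ b) xs =
     fitch_combine (fitch a (take (nleaves a) xs)) (fitch b (drop (nleaves a) xs))"

fun pt_leaf_states :: "ptree \<Rightarrow> bool \<Rightarrow> bool list pmf" where
  "pt_leaf_states (Root2 p1 a p2 b) s = leaf_states (Node p1 a p2 b) s"
| "pt_leaf_states (Root1 p a) s = bind_pmf (edge_step s p) (leaf_states a)"

fun root_fitch :: "ptree \<Rightarrow> bool list \<Rightarrow> bool set" where
  "root_fitch (Root2 p1 a p2 b) xs = fitch (Node p1 a p2 b) xs"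
| "root_fitch (Root1 p a) xs = fitch a xs"

(* probability that MP (uniform choice from the root Fitch set) recovers the
   root state; root state uniform on {0,1} *)
definition RA_MP :: "ptree \<Rightarrow> real" where
  "RA_MP t = (\<Sum>s\<in>(UNIV::bool set). (1/2) *
     measure_pmf.expectation (pt_leaf_states t s)
       (\<lambda>xs. if s \<in> root_fitch t xs then 1 / real (card (root_fitch t xs)) else 0))"

end

theory Submission imports Defs begin

lemma E_fin:
  fixes M :: "'a::finite pmf" and f :: "'a \<Rightarrow> real"
  shows "measure_pmf.expectation M f = (\<Sum>x\<in>UNIV. f x * pmf M x)"
  by (rule integral_measure_pmf_real) auto

lemma E_bind:
  fixes M :: "'a::finite pmf" and N :: "'a \<Rightarrow> 'b::finite pmf" and f :: "'b \<Rightarrow> real"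
  shows "measure_pmf.expectation (bind_pmf M N) f = measure_pmf.expectation M (\<lambda>x. measure_pmf.expectation (N x) f)"
proof -
  have "measure_pmf.expectation (bind_pmf M N) f = (\<Sum>y\<in>UNIV. f y * (\<Sum>x\<in>UNIV. pmf (N x) y * pmf M x))"
    by (simp add: E_fin pmf_bind)
  also have "\<dots> = (\<Sum>x\<in>UNIV. (\<Sum>y\<in>UNIV. f y * pmf (N x) y) * pmf M x)"
    unfolding sum_distrib_left sum_distrib_right
    by (subst sum.swap) (simp add: mult_ac)
  finally show ?thesis by (simp add: E_fin)
qed

lemma E_map:
  fixes f :: "'b \<Rightarrow> real"
  shows "measure_pmf.expectation (map_pmf g M) f = measure_pmf.expectation M (\<lambda>x. f (g x))"
  by simp

lemma E_edge:
  assumes "0 \<le> p" "p \<le> 1/2"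
  shows "measure_pmf.expectation (edge_step s p) (h::bool\<Rightarrow>real) = (1-p) * h s + p * h (\<not> s)"
  using assms unfolding edge_step_def by simp

lemma pmf_as_E:
  fixes M :: "'a::finite pmf"
  shows "pmf M X = measure_pmf.expectation M (\<lambda>Y. if Y = X then 1 else 0)"
proof -
  have "(\<Sum>Y\<in>UNIV. (if Y = X then 1 else 0) * pmf M Y) = (\<Sum>Y\<in>UNIV. if Y = X then pmf M Y else 0)"
    by (rule sum.cong) auto
  then show ?thesis by (simp add: E_fin)
qed

lemma UNIV_bset: "(UNIV::bool set set) = {{}, {True}, {False}, {True, False}}"
proof -
  have e: "A = (if True \<in> A then {True} else {}) \<union> (if False \<in> A then {False} else {})" for A :: "bool set"
  proof (rule set_eqI)
    fix x show "x \<in> A \<longleftrightarrow> x \<in> (if True \<in> A then {True} else {}) \<union> (if False \<in> A then {False} else {})"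
      by (cases x) auto
  qed
  have "A \<in> {{}, {True}, {False}, {True, False}}" for A :: "bool set"
    by (subst e) (simp add: insert_commute split: if_split)
  then show ?thesis by blast
qed

lemma len_leaf: "xs \<in> set_pmf (leaf_states t s) \<Longrightarrow> length xs = nleaves t"
  by (induction t arbitrary: s xs) auto


definition fd :: "btree \<Rightarrow> bool \<Rightarrow> bool set pmf" where
  "fd t s = map_pmf (fitch t) (leaf_states t s)"

definition sd :: "real \<Rightarrow> btree \<Rightarrow> bool \<Rightarrow> bool set pmf" where
  "sd p t s = bind_pmf (edge_step s p) (fd t)"

lemma edge_not: "edge_step (\<not> s) p = map_pmf Not (edge_step s p)"
  unfolding edge_step_def by (simp add: map_pmf_comp)

lemma leaf_not: "leaf_states t (\<not> s) = map_pmf (map Not) (leaf_states t s)"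
proof (induction t arbitrary: s)
  case Leaf
  then show ?case by simp
next
  case (Node p1 a p2 b)
  show ?case
    by (simp add: edge_not bind_map_pmf map_bind_pmf Node.IH map_pmf_comp)
qed

lemma combine_img:
  assumes "inj f"
  shows "fitch_combine (f ` A) (f ` B) = f ` fitch_combine A B"
proof -
  have i: "f ` A \<inter> f ` B = f ` (A \<inter> B)" by (rule image_Int[OF assms, symmetric])
  have u: "f ` A \<union> f ` B = f ` (A \<union> B)" by (rule image_Un[symmetric])
  show ?thesis unfolding fitch_combine_def i u by simp
qed

lemma fitch_not: "length xs = nleaves t \<Longrightarrow> fitch t (map Not xs) = Not ` fitch t xs"
proof (induction t arbitrary: xs)
  case Leaf
  then show ?case by (cases xs) auto
next
  case (Node p1 a p2 b)
  have inj: "inj Not" by (auto intro: injI)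
  have l1: "length (take (nleaves a) xs) = nleaves a" and l2: "length (drop (nleaves a) xs) = nleaves b"
    using Node.prems by auto
  have "fitch (Node p1 a p2 b) (map Not xs) =
     fitch_combine (fitch a (map Not (take (nleaves a) xs))) (fitch b (map Not (drop (nleaves a) xs)))"
    by (simp only: fitch.simps take_map drop_map)
  also have "\<dots> = fitch_combine (Not ` fitch a (take (nleaves a) xs)) (Not ` fitch b (drop (nleaves a) xs))"
    by (simp only: Node.IH(1)[OF l1] Node.IH(2)[OF l2])
  also have "\<dots> = Not ` fitch (Node p1 a p2 b) xs"
    by (simp only: combine_img[OF inj] fitch.simps)
  finally show ?case .
qed

lemma fd_not: "fd t (\<not> s) = map_pmf (image Not) (fd t s)"
  unfolding fd_def leaf_not map_pmf_comp
  by (rule map_pmf_cong) (auto simp: fitch_not len_leaf)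

lemma pmf_fd_not: "pmf (fd t (\<not> s)) X = pmf (fd t s) (Not ` X)"
proof -
  have i0: "inj Not" by (auto intro: injI)
  have inj: "inj (image Not)" by (rule injI) (simp add: inj_image_eq_iff[OF i0])
  have "X = Not ` (Not ` X)" by (simp add: image_image)
  then have "pmf (fd t (\<not> s)) X = pmf (map_pmf (image Not) (fd t s)) (Not ` (Not ` X))"
    by (simp add: fd_not)
  also have "\<dots> = pmf (fd t s) (Not ` X)" by (rule pmf_map_inj'[OF inj])
  finally show ?thesis .
qed

lemma fd_node: "fd (Node p1 a p2 b) s =
  bind_pmf (sd p1 a s) (\<lambda>A. map_pmf (fitch_combine A) (sd p2 b s))"
proof -
  have "fd (Node p1 a p2 b) s = bind_pmf (edge_step s p1) (\<lambda>s1. bind_pmf (edge_step s p2) (\<lambda>s2.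
     bind_pmf (fd a s1) (\<lambda>A. map_pmf (fitch_combine A) (fd b s2))))"
    unfolding fd_def
    apply (simp add: map_bind_pmf bind_map_pmf map_pmf_comp)
    apply (intro bind_pmf_cong refl map_pmf_cong)
    apply (auto simp: len_leaf)
    done
  also have "\<dots> = bind_pmf (sd p1 a s) (\<lambda>A. map_pmf (fitch_combine A) (sd p2 b s))"
    unfolding sd_def bind_assoc_pmf map_bind_pmf
    by (subst bind_commute_pmf) (rule refl)
  finally show ?thesis .
qed

lemma sum_bset: "(\<Sum>A\<in>UNIV. h A) = h {} + h {True} + h {False} + h {True, False}"
  by (simp add: UNIV_bset add.assoc)
lemma comb_tab:
  "fitch_combine {} B = B" "fitch_combine A {} = A"
  "fitch_combine {True} {True} = {True}" "fitch_combine {True} {False} = {True,False}"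
  "fitch_combine {True} {True,False} = {True}"
  "fitch_combine {False} {True} = {True,False}" "fitch_combine {False} {False} = {False}"
  "fitch_combine {False} {True,False} = {False}"
  "fitch_combine {True,False} {True} = {True}" "fitch_combine {True,False} {False} = {False}"
  "fitch_combine {True,False} {True,False} = {True,False}"
  by (auto simp: fitch_combine_def)

lemma set_neqs:
  "({True} = {}) = False" "({} = {True}) = False" "({False} = {}) = False" "({} = {False}) = False"
  "({True,False} = {}) = False" "({} = {True,False}) = False"
  "({True} = {False}) = False" "({False} = {True}) = False"
  "({True,False} = {True}) = False" "({True} = {True,False}) = False"
  "({True,False} = {False}) = False" "({False} = {True,False}) = False"
  by auto

definition Inv :: "bool set pmf \<Rightarrow> bool \<Rightarrow> bool" where
  "Inv D s \<longleftrightarrow> pmf D {} = 0 \<and> pmf D {\<not> s} \<le> pmf D {s}"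

lemma E_sd: "0 \<le> p \<Longrightarrow> p \<le> 1/2 \<Longrightarrow> measure_pmf.expectation (sd p t s) f =
   (1-p) * measure_pmf.expectation (fd t s) f + p * measure_pmf.expectation (fd t (\<not>s)) f"
  unfolding sd_def by (simp add: E_bind E_edge)

lemma pmf_sd: "0 \<le> p \<Longrightarrow> p \<le> 1/2 \<Longrightarrow> pmf (sd p t s) X =
   (1-p) * pmf (fd t s) X + p * pmf (fd t s) (Not ` X)"
proof -
  assume p: "0 \<le> p" "p \<le> 1/2"
  have "pmf (sd p t s) X = measure_pmf.expectation (sd p t s) (\<lambda>Y. if Y = X then 1 else 0)"
    by (rule pmf_as_E)
  also have "\<dots> = (1-p) * measure_pmf.expectation (fd t s) (\<lambda>Y. if Y = X then 1 else 0)
      + p * measure_pmf.expectation (fd t (\<not> s)) (\<lambda>Y. if Y = X then 1 else 0)"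
    by (rule E_sd[OF p])
  also have "\<dots> = (1-p) * pmf (fd t s) X + p * pmf (fd t (\<not> s)) X"
    by (simp only: pmf_as_E[symmetric])
  finally show ?thesis by (simp only: pmf_fd_not)
qed

lemma inv_sd:
  assumes I: "Inv (fd t s) s" and p: "0 \<le> p" "p \<le> 1/2"
  shows "Inv (sd p t s) s"
proof -
  define u where "u = pmf (fd t s) {s}"
  define v where "v = pmf (fd t s) {\<not> s}"
  have img: "Not ` {s} = {\<not> s}" "Not ` {\<not> s} = {s}" "Not ` {} = ({}::bool set)" by auto
  have e0: "pmf (fd t s) {} = 0" and uv: "v \<le> u" using I by (auto simp: Inv_def u_def v_def)
  have "0 \<le> (1 - 2*p) * (u - v)" using p uv by (intro mult_nonneg_nonneg) auto
  moreover have "(1 - p) * u + p * v - ((1 - p) * v + p * u) = (1 - 2*p) * (u - v)" by (simp add: algebra_simps)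
  ultimately have "(1 - p) * v + p * u \<le> (1 - p) * u + p * v" by linarith
  then show ?thesis unfolding Inv_def pmf_sd[OF p] img e0 u_def v_def by simp
qed

lemma E_comb: "measure_pmf.expectation (bind_pmf DA (\<lambda>A. map_pmf (fitch_combine A) DB)) f =
  (\<Sum>A\<in>UNIV. \<Sum>B\<in>UNIV. pmf DA A * pmf DB B * f (fitch_combine A B))"
  unfolding E_bind E_map
  unfolding E_fin sum_distrib_left sum_distrib_right
  by (simp add: mult_ac)

lemma total1: "pmf (D::bool set pmf) {} + pmf D {True} + pmf D {False} + pmf D {True, False} = 1"
  using sum_pmf_eq_1[of UNIV D] by (simp add: sum_bset)

lemma pmf_comb_gen: "pmf (bind_pmf DA (\<lambda>A. map_pmf (fitch_combine A) DB)) X =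
  (\<Sum>A\<in>UNIV. \<Sum>B\<in>UNIV. pmf DA A * pmf DB B * (if fitch_combine A B = X then 1 else 0))"
  unfolding pmf_as_E[of "bind_pmf DA _"] E_comb ..

lemma pmf_comb:
  fixes DA DB
  defines "C \<equiv> bind_pmf DA (\<lambda>A. map_pmf (fitch_combine A) DB)"
  shows "pmf C {} = pmf DA {} * pmf DB {}"
  and "pmf C {True} = pmf DA {} * pmf DB {True} + pmf DA {True} * pmf DB {} + pmf DA {True} * pmf DB {True}
     + pmf DA {True} * pmf DB {True,False} + pmf DA {True,False} * pmf DB {True}"
  and "pmf C {False} = pmf DA {} * pmf DB {False} + pmf DA {False} * pmf DB {} + pmf DA {False} * pmf DB {False}
     + pmf DA {False} * pmf DB {True,False} + pmf DA {True,False} * pmf DB {False}"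
  unfolding C_def pmf_comb_gen sum_bset
  by (simp_all only: comb_tab set_neqs if_True if_False refl mult_1_right mult_0_right add_0_left add_0_right)

lemma inv_comb:
  assumes "Inv DA s" "Inv DB s"
  shows "Inv (bind_pmf DA (\<lambda>A. map_pmf (fitch_combine A) DB)) s"
proof -
  define C where "C = bind_pmf DA (\<lambda>A. map_pmf (fitch_combine A) DB)"
  have n: "0 \<le> pmf DA X" "0 \<le> pmf DB X" for X by auto
  have z: "pmf DA {} = 0" "pmf DB {} = 0" using assms by (auto simp: Inv_def)
  have C0: "pmf C {} = 0" unfolding C_def pmf_comb z by simp
  have CT: "pmf C {True} = pmf DA {True} * pmf DB {True}
     + pmf DA {True} * pmf DB {True,False} + pmf DA {True,False} * pmf DB {True}"
    unfolding C_def pmf_comb z by simp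
  have CF: "pmf C {False} = pmf DA {False} * pmf DB {False}
     + pmf DA {False} * pmf DB {True,False} + pmf DA {True,False} * pmf DB {False}"
    unfolding C_def pmf_comb z by simp
  show ?thesis
  proof (cases s)
    case True
    have h: "pmf DA {False} \<le> pmf DA {True}" "pmf DB {False} \<le> pmf DB {True}"
      using assms True by (auto simp: Inv_def)
    have "pmf DA {False} * pmf DB {False} \<le> pmf DA {True} * pmf DB {True}"
      using h n by (intro mult_mono) auto
    moreover have "pmf DA {False} * pmf DB {True,False} \<le> pmf DA {True} * pmf DB {True,False}"
      using h n by (intro mult_right_mono) auto
    moreover have "pmf DA {True,False} * pmf DB {False} \<le> pmf DA {True,False} * pmf DB {True}"
      using h n by (intro mult_left_mono) auto
    ultimately have "pmf C {False} \<le> pmf C {True}" unfolding CT CF by linarith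
    then show ?thesis using True C0 unfolding Inv_def C_def by simp
  next
    case False
    have h: "pmf DA {True} \<le> pmf DA {False}" "pmf DB {True} \<le> pmf DB {False}"
      using assms False by (auto simp: Inv_def)
    have "pmf DA {True} * pmf DB {True} \<le> pmf DA {False} * pmf DB {False}"
      using h n by (intro mult_mono) auto
    moreover have "pmf DA {True} * pmf DB {True,False} \<le> pmf DA {False} * pmf DB {True,False}"
      using h n by (intro mult_right_mono) auto
    moreover have "pmf DA {True,False} * pmf DB {True} \<le> pmf DA {True,False} * pmf DB {False}"
      using h n by (intro mult_left_mono) auto
    ultimately have "pmf C {True} \<le> pmf C {False}" unfolding CT CF by linarith
    then show ?thesis using False C0 unfolding Inv_def C_def by simp
  qed
qed

lemma inv_fd: "valid_bt t \<Longrightarrow> Inv (fd t s) s"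
proof (induction t arbitrary: s)
  case Leaf
  have "fd Leaf s = return_pmf {s}" by (simp add: fd_def)
  then show ?case by (cases s) (auto simp: Inv_def pmf_return)
next
  case (Node p1 a p2 b)
  then show ?case
    by (simp add: fd_node inv_comb inv_sd)
qed

definition g :: "bool \<Rightarrow> bool set \<Rightarrow> real" where
  "g s X = (if s \<in> X then 1 / real (card X) else 0)"

lemma card_TF: "card {True, False} = 2" by simp

lemma E_g: "measure_pmf.expectation D (g s) =
   (if s then pmf D {True} + pmf D {True,False} / 2 else pmf D {False} + pmf D {True,False} / 2)"
  unfolding E_fin sum_bset by (cases s) (simp_all add: g_def card_TF)

lemma num_ineq:
  fixes a1 a2 a3 b1 b2 b3 :: real
  assumes eA: "a1 = 1 - a2 - a3" and eB: "b1 = 1 - b2 - b3"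
    and h: "a2 \<le> a1" "b2 \<le> b1" "0 \<le> a3" "0 \<le> b3"
  shows "((a1 + a3/2) + (b1 + b3/2)) / 2 \<le> (a1*b1 + a1*b3 + a3*b1) + (a1*b2 + a2*b1 + a3*b3) / 2"
proof -
  have p1: "0 \<le> (a1 - a2) * b3" using h by simp
  have p2: "0 \<le> a3 * (b1 - b2)" using h by simp
  have "(a1*b1 + a1*b3 + a3*b1) + (a1*b2 + a2*b1 + a3*b3) / 2 - ((a1 + a3/2) + (b1 + b3/2)) / 2
     = ((a1 - a2) * b3 + a3 * (b1 - b2)) / 4"
    unfolding eA eB by (simp add: field_simps)
  moreover have "0 \<le> ((a1 - a2) * b3 + a3 * (b1 - b2)) / 4" using p1 p2 by simp
  ultimately have "0 \<le> (a1*b1 + a1*b3 + a3*b1) + (a1*b2 + a2*b1 + a3*b3) / 2 - ((a1 + a3/2) + (b1 + b3/2)) / 2"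
    by (simp only:)
  then show ?thesis by linarith
qed

lemma comb_ineq:
  assumes "Inv DA s" "Inv DB s"
  shows "measure_pmf.expectation (bind_pmf DA (\<lambda>A. map_pmf (fitch_combine A) DB)) (g s)
     \<ge> (measure_pmf.expectation DA (g s) + measure_pmf.expectation DB (g s)) / 2"
proof -
  define C where "C = bind_pmf DA (\<lambda>A. map_pmf (fitch_combine A) DB)"
  have n: "0 \<le> pmf DA X" "0 \<le> pmf DB X" for X by auto
  have z: "pmf DA {} = 0" "pmf DB {} = 0" using assms by (auto simp: Inv_def)
  have CT: "pmf C {True} = pmf DA {True} * pmf DB {True}
     + pmf DA {True} * pmf DB {True,False} + pmf DA {True,False} * pmf DB {True}"
    unfolding C_def pmf_comb z by simp
  have CF: "pmf C {False} = pmf DA {False} * pmf DB {False}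
     + pmf DA {False} * pmf DB {True,False} + pmf DA {True,False} * pmf DB {False}"
    unfolding C_def pmf_comb z by simp
  have CTF: "pmf C {True,False} = pmf DA {} * pmf DB {True,False} + pmf DA {True,False} * pmf DB {} + pmf DA {True} * pmf DB {False}
     + pmf DA {False} * pmf DB {True} + pmf DA {True,False} * pmf DB {True,False}"
    unfolding C_def pmf_comb_gen sum_bset
    by (simp only: comb_tab set_neqs if_True if_False refl mult_1_right mult_0_right add_0_left add_0_right)
  have CTF': "pmf C {True,False} = pmf DA {True} * pmf DB {False}
     + pmf DA {False} * pmf DB {True} + pmf DA {True,False} * pmf DB {True,False}"
    unfolding CTF z by simp
  have tA: "pmf DA {True} = 1 - pmf DA {False} - pmf DA {True, False}"
    using total1[of DA] z by linarith
  have tB: "pmf DB {True} = 1 - pmf DB {False} - pmf DB {True, False}"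
    using total1[of DB] z by linarith
  have tA': "pmf DA {False} = 1 - pmf DA {True} - pmf DA {True, False}"
    using total1[of DA] z by linarith
  have tB': "pmf DB {False} = 1 - pmf DB {True} - pmf DB {True, False}"
    using total1[of DB] z by linarith
  show ?thesis
  proof (cases s)
    case True
    have h: "pmf DA {False} \<le> pmf DA {True}" "pmf DB {False} \<le> pmf DB {True}"
      using assms True by (auto simp: Inv_def)
    have "((pmf DA {True} + pmf DA {True,False}/2) + (pmf DB {True} + pmf DB {True,False}/2)) / 2
       \<le> (pmf DA {True} * pmf DB {True} + pmf DA {True} * pmf DB {True,False} + pmf DA {True,False} * pmf DB {True})
         + (pmf DA {True} * pmf DB {False} + pmf DA {False} * pmf DB {True} + pmf DA {True,False} * pmf DB {True,False}) / 2"
      by (rule num_ineq[OF tA tB h n(1) n(2)])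
    then have "(measure_pmf.expectation DA (g s) + measure_pmf.expectation DB (g s)) / 2
       \<le> measure_pmf.expectation C (g s)"
      unfolding E_g using True CT CTF' by simp
    then show ?thesis unfolding C_def .
  next
    case False
    have h: "pmf DA {True} \<le> pmf DA {False}" "pmf DB {True} \<le> pmf DB {False}"
      using assms False by (auto simp: Inv_def)
    have "((pmf DA {False} + pmf DA {True,False}/2) + (pmf DB {False} + pmf DB {True,False}/2)) / 2
       \<le> (pmf DA {False} * pmf DB {False} + pmf DA {False} * pmf DB {True,False} + pmf DA {True,False} * pmf DB {False})
         + (pmf DA {False} * pmf DB {True} + pmf DA {True} * pmf DB {False} + pmf DA {True,False} * pmf DB {True,False}) / 2"
      by (rule num_ineq[OF tA' tB' h n(1) n(2)])
    then have "((pmf DA {False} + pmf DA {True,False}/2) + (pmf DB {False} + pmf DB {True,False}/2)) / 2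
       \<le> (pmf DA {False} * pmf DB {False} + pmf DA {False} * pmf DB {True,False} + pmf DA {True,False} * pmf DB {False})
         + (pmf DA {True} * pmf DB {False} + pmf DA {False} * pmf DB {True} + pmf DA {True,False} * pmf DB {True,False}) / 2"
      by (simp only: add.commute[of "pmf DA {True} * pmf DB {False}" "pmf DA {False} * pmf DB {True}"])
    then have "(measure_pmf.expectation DA (g s) + measure_pmf.expectation DB (g s)) / 2
       \<le> measure_pmf.expectation C (g s)"
      unfolding E_g if_not_P[OF False] CF CTF' .
    then show ?thesis unfolding C_def .
  qed
qed

lemma RA1: "RA_MP (Root1 p a) = (\<Sum>s\<in>UNIV. (1/2) * measure_pmf.expectation (sd p a s) (g s))"
proof -
  have "sd p a s = map_pmf (fitch a) (bind_pmf (edge_step s p) (leaf_states a))" for s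
    by (simp add: sd_def fd_def[abs_def] map_bind_pmf)
  then have "measure_pmf.expectation (sd p a s) (g s) =
    measure_pmf.expectation (pt_leaf_states (Root1 p a) s)
       (\<lambda>xs. if s \<in> root_fitch (Root1 p a) xs then 1 / real (card (root_fitch (Root1 p a) xs)) else 0)" for s
    by (simp only: E_map pt_leaf_states.simps root_fitch.simps g_def)
  then show ?thesis unfolding RA_MP_def by presburger
qed

lemma RA2: "RA_MP (Root2 p1 a p2 b) = (\<Sum>s\<in>UNIV. (1/2) * measure_pmf.expectation (fd (Node p1 a p2 b) s) (g s))"
proof -
  have "measure_pmf.expectation (fd (Node p1 a p2 b) s) (g s) =
    measure_pmf.expectation (pt_leaf_states (Root2 p1 a p2 b) s)
       (\<lambda>xs. if s \<in> root_fitch (Root2 p1 a p2 b) xs then 1 / real (card (root_fitch (Root2 p1 a p2 b) xs)) else 0)" for s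
    by (simp only: fd_def E_map pt_leaf_states.simps root_fitch.simps g_def)
  then show ?thesis unfolding RA_MP_def by presburger
qed

theorem mainTheorem14:
  fixes p1 p2 :: real and T1 T2 :: btree
  assumes "valid_pt (Root2 p1 T1 p2 T2)"
  shows "RA_MP (Root2 p1 T1 p2 T2) \<ge> (RA_MP (Root1 p1 T1) + RA_MP (Root1 p2 T2)) / 2"
proof -
  have v: "0 \<le> p1" "p1 \<le> 1/2" "0 \<le> p2" "p2 \<le> 1/2" "valid_bt T1" "valid_bt T2" using assms by auto
  have k: "measure_pmf.expectation (fd (Node p1 T1 p2 T2) s) (g s) \<ge>
     (measure_pmf.expectation (sd p1 T1 s) (g s) + measure_pmf.expectation (sd p2 T2 s) (g s)) / 2" for s
    unfolding fd_node using v by (intro comb_ineq inv_sd inv_fd) auto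
  show ?thesis unfolding RA1 RA2 UNIV_bool using k[of True] k[of False] by simp
qed

end
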